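(* The greedy algorithm g-HHL is an $O(\sqrt n\log n)$-approximation algorithm for HL: on every input graph with $n$ vertices, the hub labeling it outputs has total size at most $O(\sqrt n\log n)$ times the minimum total size of a hub labeling of that graph.
   Context: Input: a directed graph $G=(V,E)$, $n=|V|$, with nonnegative arc lengths and no zero-length cycles; $\mathrm{dist}(u,w)$ is the shortest-path distance. A hub labeling (HL) assigns to each $v$ a forward label $L_f(v)\subseteq V$ and backward label $L_b(v)\subseteq V$ such that for every ordered pair $(u,w)$ with $w$ reachable from $u$, $L_f(u)\cap L_b(w)$ contains a vertex on some shortest $u$–$w$ path; its size is $\sum_v(|L_f(v)|+|L_b(v)|)$. (For undirected graphs $L_f=L_b=L$, pairs are unordered and the size is $\sum_v|L(v)|$.) g-HHL: start with empty labels; let $U$ be the set of uncovered pairs. For each not-yet-selected vertex $v$, the center graph $G_v$ is the bipartite graph with two copies $X,Y$ of $V$ and an arc $(u,w)$ for each $(u,w)\in U$ such that some shortest $u$–$w$ path contains $v$ (in the undirected case: the graph on $V$ with an edge, possibly a self-loop, $\{u,w\}$ for each uncovered unordered pair with a shortest path through $v$). In each iteration g-HHL selects a not-yet-selected vertex $v$ whose center graph has the maximum number of edges (ties arbitrary) and adds $v$ to $L_f(u)$ for each non-isolated $u\in X$ and to $L_b(w)$ for each non-isolated $w\in Y$ (undirected case: to $L(u)$ for each non-isolated $u$), until all pairs are covered. The output is a hierarchical labeling. *)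

theory Defs
  imports Complex_Main
begin

text \<open>Directed graphs with vertex set V (a finite set of naturals; any finite
vertex set can be relabelled into nat), arc set E and arc lengths len.\<close>

definition walk :: "nat set \<Rightarrow> (nat \<times> nat) set \<Rightarrow> nat list \<Rightarrow> bool" where
  "walk V E P \<longleftrightarrow> P \<noteq> [] \<and> set P \<subseteq> V \<and>
     (\<forall>i. Suc i < length P \<longrightarrow> (P ! i, P ! Suc i) \<in> E)"

definition walk_len :: "(nat \<times> nat \<Rightarrow> real) \<Rightarrow> nat list \<Rightarrow> real" where
  "walk_len len P = (\<Sum>i<length P - 1. len (P ! i, P ! Suc i))"

definition reachable :: "nat set \<Rightarrow> (nat \<times> nat) set \<Rightarrow> nat \<Rightarrow> nat \<Rightarrow> bool" where
  "reachable V E u w \<longleftrightarrow> (\<exists>P. walk V E P \<and> hd P = u \<and> last P = w)"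

definition shortest_path ::
  "nat set \<Rightarrow> (nat \<times> nat) set \<Rightarrow> (nat \<times> nat \<Rightarrow> real) \<Rightarrow> nat \<Rightarrow> nat \<Rightarrow> nat list \<Rightarrow> bool" where
  "shortest_path V E len u w P \<longleftrightarrow> walk V E P \<and> hd P = u \<and> last P = w \<and>
     (\<forall>Q. walk V E Q \<and> hd Q = u \<and> last Q = w \<longrightarrow> walk_len len P \<le> walk_len len Q)"

definition on_sp ::
  "nat set \<Rightarrow> (nat \<times> nat) set \<Rightarrow> (nat \<times> nat \<Rightarrow> real) \<Rightarrow> nat \<Rightarrow> nat \<Rightarrow> nat \<Rightarrow> bool" where
  "on_sp V E len v u w \<longleftrightarrow> (\<exists>P. shortest_path V E len u w P \<and> v \<in> set P)"

definition valid_graph :: "nat set \<Rightarrow> (nat \<times> nat) set \<Rightarrow> (nat \<times> nat \<Rightarrow> real) \<Rightarrow> bool" where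
  "valid_graph V E len \<longleftrightarrow> finite V \<and> E \<subseteq> V \<times> V \<and> (\<forall>e\<in>E. 0 \<le> len e) \<and>
     (\<forall>P. walk V E P \<and> 2 \<le> length P \<and> hd P = last P \<longrightarrow> 0 < walk_len len P)"

definition is_HL ::
  "nat set \<Rightarrow> (nat \<times> nat) set \<Rightarrow> (nat \<times> nat \<Rightarrow> real) \<Rightarrow> (nat \<Rightarrow> nat set) \<Rightarrow> (nat \<Rightarrow> nat set) \<Rightarrow> bool" where
  "is_HL V E len Lf Lb \<longleftrightarrow> (\<forall>v\<in>V. Lf v \<subseteq> V \<and> Lb v \<subseteq> V) \<and>
     (\<forall>u\<in>V. \<forall>w\<in>V. reachable V E u w \<longrightarrow> (\<exists>h\<in>Lf u \<inter> Lb w. on_sp V E len h u w))"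

definition hl_size :: "nat set \<Rightarrow> (nat \<Rightarrow> nat set) \<Rightarrow> (nat \<Rightarrow> nat set) \<Rightarrow> nat" where
  "hl_size V Lf Lb = (\<Sum>v\<in>V. card (Lf v) + card (Lb v))"

definition hl_opt :: "nat set \<Rightarrow> (nat \<times> nat) set \<Rightarrow> (nat \<times> nat \<Rightarrow> real) \<Rightarrow> nat" where
  "hl_opt V E len = (LEAST s. \<exists>Lf Lb. is_HL V E len Lf Lb \<and> hl_size V Lf Lb = s)"

definition uncovered ::
  "nat set \<Rightarrow> (nat \<times> nat) set \<Rightarrow> (nat \<times> nat \<Rightarrow> real) \<Rightarrow> (nat \<Rightarrow> nat set) \<Rightarrow> (nat \<Rightarrow> nat set) \<Rightarrow> (nat \<times> nat) set" where
  "uncovered V E len Lf Lb = {(u, w). u \<in> V \<and> w \<in> V \<and> reachable V E u w \<and>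
       \<not> (\<exists>h\<in>Lf u \<inter> Lb w. on_sp V E len h u w)}"

text \<open>Arc set of the center graph G_v (arcs from copy X to copy Y).\<close>
definition center_graph ::
  "nat set \<Rightarrow> (nat \<times> nat) set \<Rightarrow> (nat \<times> nat \<Rightarrow> real) \<Rightarrow> (nat \<Rightarrow> nat set) \<Rightarrow> (nat \<Rightarrow> nat set) \<Rightarrow> nat \<Rightarrow> (nat \<times> nat) set" where
  "center_graph V E len Lf Lb v = {(u, w) \<in> uncovered V E len Lf Lb. on_sp V E len v u w}"

type_synonym ghhl_state = "nat set \<times> (nat \<Rightarrow> nat set) \<times> (nat \<Rightarrow> nat set)"

definition ghhl_step ::
  "nat set \<Rightarrow> (nat \<times> nat) set \<Rightarrow> (nat \<times> nat \<Rightarrow> real) \<Rightarrow> ghhl_state \<Rightarrow> ghhl_state \<Rightarrow> bool" where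
  "ghhl_step V E len st st' \<longleftrightarrow>
     (case st of (S, Lf, Lb) \<Rightarrow>
       uncovered V E len Lf Lb \<noteq> {} \<and>
       (\<exists>v\<in>V - S.
          (\<forall>v'\<in>V - S. card (center_graph V E len Lf Lb v') \<le> card (center_graph V E len Lf Lb v)) \<and>
          st' = (insert v S,
                 (\<lambda>u. if u \<in> fst ` center_graph V E len Lf Lb v then insert v (Lf u) else Lf u),
                 (\<lambda>w. if w \<in> snd ` center_graph V E len Lf Lb v then insert v (Lb w) else Lb w))))"

text \<open>(Lf, Lb) is a possible output of g-HHL (for some tie-breaking): reachable from
the empty labeling by iterations, with all pairs covered.\<close>
definition ghhl_output ::
  "nat set \<Rightarrow> (nat \<times> nat) set \<Rightarrow> (nat \<times> nat \<Rightarrow> real) \<Rightarrow> (nat \<Rightarrow> nat set) \<Rightarrow> (nat \<Rightarrow> nat set) \<Rightarrow> bool" where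
  "ghhl_output V E len Lf Lb \<longleftrightarrow>
     (\<exists>S. (ghhl_step V E len)\<^sup>*\<^sup>* ({}, (\<lambda>_. {}), (\<lambda>_. {})) (S, Lf, Lb) \<and>
          uncovered V E len Lf Lb = {})"

end

theory Submission
  imports Defs
begin
definition pot :: "real \<Rightarrow> real \<Rightarrow> real" where
"pot a x = (if x \<le> a then 2*x else 4*a - 2*a^2/x)"

lemma pot_mono: assumes "0 \<le> a" "0 \<le> x" "x \<le> y" shows "pot a x \<le> pot a y"
proof (cases "x \<le> a")
  case True
  show ?thesis
  proof (cases "y \<le> a")
    case True then show ?thesis using \<open>x\<le>a\<close> assms by (simp add: pot_def)
  next
    case False
    have "a^2/y \<le> a" using False assms by (simp add: power2_eq_square divide_le_eq mult_left_mono)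
    then show ?thesis using False True by (simp add: pot_def)
  qed
next
  case False
  then have "a^2/y \<le> a^2/x" using assms by (intro divide_left_mono) auto
  then show ?thesis using False assms by (simp add: pot_def)
qed

lemma pot_le: assumes "0 \<le> a" "0 \<le> x" shows "pot a x \<le> 4*a"
  using assms by (auto simp: pot_def)

lemma pot_nonneg: assumes "0 \<le> a" "0 \<le> x" shows "0 \<le> pot a x"
proof (cases "x \<le> a")
  case False
  have "a^2/x \<le> a" using False assms by (simp add: power2_eq_square divide_le_eq mult_left_mono)
  then show ?thesis using False assms by (simp add: pot_def)
qed (use assms in \<open>simp add: pot_def\<close>)

lemma pot_step:
  assumes "0 \<le> a" "0 < n" "0 \<le> m" "m \<le> U" "cost \<le> 2*m" "cost \<le> 2*n" "n*U^2 \<le> m*a^2"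
  shows "cost + pot a (U-m) \<le> pot a U"
proof (cases "U \<le> a")
  case True then show ?thesis using assms by (simp add: pot_def)
next
  case False
  then have U: "U > 0" using assms by simp
  have n: "n \<le> m*a^2/U^2" using assms(7) U by (simp add: le_divide_eq)
  show ?thesis
  proof (cases "U - m \<le> a")
    case False
    have Um: "U - m > 0" using False assms by simp
    have "m*a^2/U^2 \<le> m*a^2/(U*(U-m))"
      using U Um assms by (intro divide_left_mono) (auto simp: power2_eq_square intro!: mult_left_mono)
    also have "m*a^2/(U*(U-m)) = a^2/(U-m) - a^2/U" using U Um by (simp add: field_simps)
    finally show ?thesis using n False \<open>\<not> U \<le> a\<close> assms by (simp add: pot_def)
  next
    case True
    have key: "2*m*a^2 \<le> 4*a*U^2 - 2*a^2*U - 2*U^3 + 2*m*U^2"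
    proof -
      have "m*(U+a) \<ge> (U-a)*U" using True assms by (intro mult_mono) auto
      then have "0 \<le> (U-a)*(m*(U+a) - U*(U-a))" using \<open>\<not> U \<le> a\<close> by (intro mult_nonneg_nonneg) (auto simp: algebra_simps)
      then show ?thesis by (simp add: algebra_simps power2_eq_square power3_eq_cube)
    qed
    have "2*(m*a^2/U^2) \<le> 4*a - 2*a^2/U - 2*U + 2*m"
      using key U by (simp add: field_simps power2_eq_square power3_eq_cube)
    then show ?thesis using n True \<open>\<not> U \<le> a\<close> assms by (simp add: pot_def)
  qed
qed

lemma unc_sub: "uncovered V E len Lf Lb \<subseteq> V \<times> V"
  by (auto simp: uncovered_def)

lemma cg_sub: "center_graph V E len Lf Lb v \<subseteq> uncovered V E len Lf Lb"
  by (auto simp: center_graph_def)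

lemma unc_mono:
  assumes "\<And>u. Lf u \<subseteq> Lf' u" "\<And>w. Lb w \<subseteq> Lb' w"
  shows "uncovered V E len Lf' Lb' \<subseteq> uncovered V E len Lf Lb"
  using assms by (auto simp: uncovered_def) blast

lemma unc_after:
  fixes V E len Lf Lb v
  defines "C \<equiv> center_graph V E len Lf Lb v"
  shows "uncovered V E len
     (\<lambda>u. if u \<in> fst ` C then insert v (Lf u) else Lf u)
     (\<lambda>w. if w \<in> snd ` C then insert v (Lb w) else Lb w)
   \<subseteq> uncovered V E len Lf Lb - C"
proof
  fix p assume p: "p \<in> uncovered V E len
     (\<lambda>u. if u \<in> fst ` C then insert v (Lf u) else Lf u)
     (\<lambda>w. if w \<in> snd ` C then insert v (Lb w) else Lb w)"
  have "uncovered V E len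
     (\<lambda>u. if u \<in> fst ` C then insert v (Lf u) else Lf u)
     (\<lambda>w. if w \<in> snd ` C then insert v (Lb w) else Lb w) \<subseteq> uncovered V E len Lf Lb"
    by (rule unc_mono) auto
  then have "p \<in> uncovered V E len Lf Lb" using p by blast
  moreover have "p \<notin> C"
  proof
    assume pc: "p \<in> C"
    obtain u w where pw: "p = (u, w)" by force
    have "u \<in> fst ` C" "w \<in> snd ` C" using pc pw by force+
    moreover have "on_sp V E len v u w" using pc pw by (auto simp: C_def center_graph_def)
    ultimately show False using p pw by (auto simp: uncovered_def)
  qed
  ultimately show "p \<in> uncovered V E len Lf Lb - C" by blast
qed

lemma card_insert_Suc: "card (insert v A) \<le> Suc (card A)"
  by (cases "finite A") (auto simp: card_insert_if)

lemma card_if_insert: "card (if P then insert v A else A) \<le> card A + (if P then 1 else 0)"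
  by (cases "finite A") (auto simp: card_insert_if)

lemma size_after:
  assumes fin: "finite V" and F: "F \<subseteq> V" and B: "G \<subseteq> V"
  shows "hl_size V (\<lambda>u. if u \<in> F then insert v (Lf u) else Lf u)
                   (\<lambda>w. if w \<in> G then insert v (Lb w) else Lb w)
         \<le> hl_size V Lf Lb + card F + card G"
proof -
  have "hl_size V (\<lambda>u. if u \<in> F then insert v (Lf u) else Lf u)
                   (\<lambda>w. if w \<in> G then insert v (Lb w) else Lb w)
      \<le> (\<Sum>u\<in>V. (card (Lf u) + (if u \<in> F then 1 else 0)) + (card (Lb u) + (if u \<in> G then 1 else 0)))"
    unfolding hl_size_def
    by (intro sum_mono add_mono) (auto simp: card_insert_Suc)
  also have "\<dots> = hl_size V Lf Lb + (\<Sum>u\<in>V. (if u \<in> F then 1 else 0)) + (\<Sum>u\<in>V. (if u \<in> G then 1 else 0))"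
    by (simp add: hl_size_def sum.distrib algebra_simps)
  also have "(\<Sum>u\<in>V. (if u \<in> F then 1 else 0::nat)) = card F"
    using fin F by (simp add: sum.If_cases Int_absorb1)
  also have "(\<Sum>u\<in>V. (if u \<in> G then 1 else 0::nat)) = card G"
    using fin B by (simp add: sum.If_cases Int_absorb1)
  finally show ?thesis .
qed

lemma double_count:
  assumes "finite V" "\<forall>u\<in>V. L u \<subseteq> V"
  shows "(\<Sum>u\<in>V. card (L u)) = (\<Sum>h\<in>V. card {u\<in>V. h \<in> L u})"
proof -
  have "(\<Sum>u\<in>V. card (L u)) = (\<Sum>u\<in>V. \<Sum>h\<in>V. if h \<in> L u then 1 else 0)"
  proof (rule sum.cong[OF refl])
    fix u assume "u \<in> V"
    then have "V \<inter> L u = L u" using assms by blast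
    then show "card (L u) = (\<Sum>h\<in>V. if h \<in> L u then 1 else 0)"
      using assms(1) by (simp add: sum.If_cases)
  qed
  also have "\<dots> = (\<Sum>h\<in>V. \<Sum>u\<in>V. if h \<in> L u then 1 else 0)" by (rule sum.swap)
  also have "\<dots> = (\<Sum>h\<in>V. card {u\<in>V. h \<in> L u})"
  proof (rule sum.cong[OF refl])
    fix h
    have "V \<inter> {u. h \<in> L u} = {u\<in>V. h \<in> L u}" by blast
    then show "(\<Sum>u\<in>V. if h \<in> L u then 1 else 0) = card {u\<in>V. h \<in> L u}"
      using assms(1) by (simp add: sum.If_cases)
  qed
  finally show ?thesis .
qed

lemma min_sqrt_bound:
  fixes x m p q :: real
  assumes "0 \<le> x" "0 \<le> m" "0 \<le> p" "0 \<le> q" "x \<le> m" "x \<le> p*q"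
  shows "x \<le> sqrt m * (p+q)/2"
proof (cases "(p+q)/2 \<le> sqrt m")
  case True
  have "0 \<le> (p-q)^2" by simp
  then have "p*q \<le> ((p+q)/2)^2" by (simp add: power2_eq_square algebra_simps)
  also have "\<dots> = ((p+q)/2) * ((p+q)/2)" by (simp add: power2_eq_square)
  also have "\<dots> \<le> sqrt m * ((p+q)/2)" using True assms by (intro mult_right_mono) auto
  finally show ?thesis using assms by simp
next
  case False
  have "m = sqrt m * sqrt m" using assms by simp
  also have "\<dots> \<le> sqrt m * ((p+q)/2)" using False assms by (intro mult_left_mono) auto
  finally show ?thesis using assms by simp
qed

lemma lower_bound:
  assumes fin: "finite V" and HL: "is_HL V E len Lo Bo"
    and sel: "\<forall>h\<in>S. \<forall>p\<in>uncovered V E len Lf Lb. \<not> on_sp V E len h (fst p) (snd p)"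
    and mx: "\<forall>v'\<in>V - S. card (center_graph V E len Lf Lb v') \<le> m"
  shows "real (card (uncovered V E len Lf Lb))^2 \<le> real m * (real (hl_size V Lo Bo))^2 / 4"
proof -
  define U where "U = uncovered V E len Lf Lb"
  define A where "A h = {u\<in>V. h \<in> Lo u}" for h
  define B where "B h = {w\<in>V. h \<in> Bo w}" for h
  define D where "D h = center_graph V E len Lf Lb h \<inter> (A h \<times> B h)" for h
  have finVV: "finite (V \<times> V)" using fin by simp
  have finA: "finite (A h)" "finite (B h)" for h using fin by (auto simp: A_def B_def)
  have LoV: "\<forall>u\<in>V. Lo u \<subseteq> V" and BoV: "\<forall>u\<in>V. Bo u \<subseteq> V" using HL by (auto simp: is_HL_def)
  have "U \<subseteq> (\<Union>h\<in>V-S. D h)"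
  proof
    fix p assume p: "p \<in> U"
    obtain u w where pw: "p = (u,w)" by force
    have uw: "u \<in> V" "w \<in> V" "reachable V E u w" using p pw by (auto simp: U_def uncovered_def)
    then obtain h where h: "h \<in> Lo u" "h \<in> Bo w" "on_sp V E len h u w" using HL unfolding is_HL_def by blast
    have hV: "h \<in> V" using h uw LoV by blast
    have hS: "h \<notin> S" using sel p pw h unfolding U_def by force
    have "p \<in> D h" using p pw h uw unfolding D_def A_def B_def U_def center_graph_def by auto
    then show "p \<in> (\<Union>h\<in>V-S. D h)" using hV hS by blast
  qed
  then have "card U \<le> card (\<Union>h\<in>V-S. D h)"
    using fin by (intro card_mono) (auto simp: D_def A_def B_def)
  also have "\<dots> \<le> (\<Sum>h\<in>V-S. card (D h))" using fin by (intro card_UN_le) auto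
  finally have "real (card U) \<le> (\<Sum>h\<in>V-S. real (card (D h)))" by (metis of_nat_le_iff of_nat_sum)
  also have "\<dots> \<le> (\<Sum>h\<in>V-S. sqrt m * (real (card (A h)) + real (card (B h)))/2)"
  proof (rule sum_mono)
    fix h assume h: "h \<in> V - S"
    have "card (D h) \<le> card (center_graph V E len Lf Lb h)"
      using finVV cg_sub[of V E len Lf Lb h] unc_sub[of V E len Lf Lb]
      by (intro card_mono) (auto simp: D_def intro: finite_subset)
    also have "\<dots> \<le> m" using mx h by blast
    finally have 1: "real (card (D h)) \<le> real m" by simp
    have "card (D h) \<le> card (A h \<times> B h)" using finA by (intro card_mono) (auto simp: D_def)
    then have 2: "real (card (D h)) \<le> real (card (A h)) * real (card (B h))"
      by (simp add: card_cartesian_product flip: of_nat_mult)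
    show "real (card (D h)) \<le> sqrt m * (real (card (A h)) + real (card (B h)))/2"
      by (rule min_sqrt_bound[OF _ _ _ _ 1 2]) auto
  qed
  also have "\<dots> \<le> (\<Sum>h\<in>V. sqrt m * (real (card (A h)) + real (card (B h)))/2)"
    using fin by (intro sum_mono2) auto
  also have "\<dots> = sqrt m * (\<Sum>h\<in>V. real (card (A h)) + real (card (B h))) / 2"
    by (simp add: sum_distrib_left sum_divide_distrib)
  also have "(\<Sum>h\<in>V. real (card (A h)) + real (card (B h))) = real (hl_size V Lo Bo)"
  proof -
    have "hl_size V Lo Bo = (\<Sum>h\<in>V. card (A h)) + (\<Sum>h\<in>V. card (B h))"
      unfolding hl_size_def sum.distrib A_def B_def
      using double_count[OF fin LoV] double_count[OF fin BoV] by simp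
    then show ?thesis by (simp add: sum.distrib)
  qed
  finally have U: "real (card U) \<le> sqrt m * real (hl_size V Lo Bo) / 2" .
  have "real (card U)^2 \<le> (sqrt m * real (hl_size V Lo Bo) / 2)^2"
    using U by (intro power_mono) auto
  also have "\<dots> = real m * (real (hl_size V Lo Bo))^2 / 4"
    by (simp add: power_mult_distrib power_divide)
  finally show ?thesis by (simp add: U_def)
qed

definition Inv :: "nat set \<Rightarrow> (nat \<times> nat) set \<Rightarrow> (nat \<times> nat \<Rightarrow> real) \<Rightarrow> real \<Rightarrow> ghhl_state \<Rightarrow> bool" where
  "Inv V E len a st = (case st of (S, Lf, Lb) \<Rightarrow>
     (\<forall>u. Lf u \<subseteq> V \<and> Lb u \<subseteq> V) \<and>
     (\<forall>h\<in>S. \<forall>p\<in>uncovered V E len Lf Lb. \<not> on_sp V E len h (fst p) (snd p)) \<and>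
     real (hl_size V Lf Lb) + pot a (real (card (uncovered V E len Lf Lb))) \<le> 4*a)"

lemma Inv_init:
  assumes "0 \<le> a"
  shows "Inv V E len a ({}, (\<lambda>_. {}), (\<lambda>_. {}))"
  using pot_le[OF assms, of "real (card (uncovered V E len (\<lambda>_. {}) (\<lambda>_. {})))"]
  by (simp add: Inv_def hl_size_def)

lemma Inv_step:
  assumes fin: "finite V" and HL: "is_HL V E len Lo Bo"
    and a: "a = sqrt (real (card V)) * real (hl_size V Lo Bo) / 2"
    and inv: "Inv V E len a st" and step: "ghhl_step V E len st st'"
  shows "Inv V E len a st'"
proof -
  obtain S Lf Lb where st: "st = (S, Lf, Lb)" by (cases st) auto
  define U where "U = uncovered V E len Lf Lb"
  from step st obtain v where v: "v \<in> V - S"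
    and mx: "\<forall>v'\<in>V - S. card (center_graph V E len Lf Lb v') \<le> card (center_graph V E len Lf Lb v)"
    and st': "st' = (insert v S,
                 (\<lambda>u. if u \<in> fst ` center_graph V E len Lf Lb v then insert v (Lf u) else Lf u),
                 (\<lambda>w. if w \<in> snd ` center_graph V E len Lf Lb v then insert v (Lb w) else Lb w))"
    by (auto simp: ghhl_step_def)
  define C where "C = center_graph V E len Lf Lb v"
  define Lf' where "Lf' = (\<lambda>u. if u \<in> fst ` C then insert v (Lf u) else Lf u)"
  define Lb' where "Lb' = (\<lambda>w. if w \<in> snd ` C then insert v (Lb w) else Lb w)"
  define U' where "U' = uncovered V E len Lf' Lb'"
  have st'': "st' = (insert v S, Lf', Lb')" using st' by (simp add: Lf'_def Lb'_def C_def)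
  have lab: "\<forall>u. Lf u \<subseteq> V \<and> Lb u \<subseteq> V"
    and sel: "\<forall>h\<in>S. \<forall>p\<in>U. \<not> on_sp V E len h (fst p) (snd p)"
    and pot0: "real (hl_size V Lf Lb) + pot a (real (card U)) \<le> 4*a"
    using inv st by (auto simp: Inv_def U_def)
  have CU: "C \<subseteq> U" using cg_sub by (simp add: C_def U_def)
  have UVV: "U \<subseteq> V \<times> V" using unc_sub by (simp add: U_def)
  have finU: "finite U" using UVV fin by (auto intro: finite_subset)
  have finC: "finite C" using CU finU by (auto intro: finite_subset)
  have U'sub: "U' \<subseteq> U - C" using unc_after[of V E len Lf Lb v] by (simp add: U'_def U_def C_def Lf'_def Lb'_def)
  have lab': "\<forall>u. Lf' u \<subseteq> V \<and> Lb' u \<subseteq> V" using lab v by (auto simp: Lf'_def Lb'_def)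
  have sel': "\<forall>h\<in>insert v S. \<forall>p\<in>U'. \<not> on_sp V E len h (fst p) (snd p)"
  proof (intro ballI)
    fix h p assume h: "h \<in> insert v S" and p: "p \<in> U'"
    then have pU: "p \<in> U" "p \<notin> C" using U'sub by auto
    show "\<not> on_sp V E len h (fst p) (snd p)"
    proof (cases "h = v")
      case True
      then show ?thesis using pU by (auto simp: C_def U_def center_graph_def)
    next
      case False then show ?thesis using h pU sel by auto
    qed
  qed
  have fstV: "fst ` C \<subseteq> V" and sndV: "snd ` C \<subseteq> V" using CU UVV by auto
  define m where "m = card C"
  define cost where "cost = card (fst ` C) + card (snd ` C)"
  have size: "hl_size V Lf' Lb' \<le> hl_size V Lf Lb + cost"
    using size_after[OF fin fstV sndV, of v Lf Lb] by (simp add: Lf'_def Lb'_def cost_def)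
  have c1: "cost \<le> 2*m" using card_image_le[OF finC, of fst] card_image_le[OF finC, of snd]
    by (simp add: cost_def m_def)
  have c2: "cost \<le> 2*card V" using card_mono[OF fin fstV] card_mono[OF fin sndV] by (simp add: cost_def)
  have n0: "0 < card V" using v fin by (auto simp: card_gt_0_iff)
  have lb: "real (card U)^2 \<le> real m * (real (hl_size V Lo Bo))^2 / 4"
    using lower_bound[OF fin HL, of S Lf Lb "card C"] sel mx by (simp add: U_def m_def C_def)
  have a0: "0 \<le> a" unfolding a by (intro divide_nonneg_nonneg mult_nonneg_nonneg) auto
  have a2: "a^2 = real (card V) * (real (hl_size V Lo Bo))^2 / 4"
    unfolding a by (simp add: power_mult_distrib power_divide)
  have lb2: "real (card V) * real (card U)^2 \<le> real m * a^2"
  proof -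
    have "real (card V) * real (card U)^2 \<le> real (card V) * (real m * (real (hl_size V Lo Bo))^2 / 4)"
      by (rule mult_left_mono[OF lb]) simp
    also have "\<dots> = real m * a^2" unfolding a2 by (simp add: algebra_simps)
    finally show ?thesis .
  qed
  have mU: "m \<le> card U" using card_mono[OF finU CU] by (simp add: m_def)
  have ps: "real cost + pot a (real (card U) - real m) \<le> pot a (real (card U))"
    by (rule pot_step[OF a0 _ _ _ _ _ lb2]) (use n0 mU c1 c2 in auto)
  have "card U' \<le> card (U - C)" using U'sub finU by (intro card_mono) auto
  also have "card (U - C) = card U - m" using finC CU by (simp add: card_Diff_subset m_def)
  finally have "real (card U') \<le> real (card U) - real m" using mU by linarith
  then have "pot a (real (card U')) \<le> pot a (real (card U) - real m)"
    by (intro pot_mono[OF a0]) auto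
  then have "real (hl_size V Lf' Lb') + pot a (real (card U')) \<le> 4*a"
    using size ps pot0 by (smt (verit) of_nat_add of_nat_mono)
  then show ?thesis using lab' sel' by (simp add: st'' Inv_def U'_def)
qed

lemma run_Inv:
  assumes fin: "finite V" and HL: "is_HL V E len Lo Bo"
    and a: "a = sqrt (real (card V)) * real (hl_size V Lo Bo) / 2"
    and run: "(ghhl_step V E len)\<^sup>*\<^sup>* ({}, (\<lambda>_. {}), (\<lambda>_. {})) st"
  shows "Inv V E len a st"
  using run
proof induction
  case base show ?case by (rule Inv_init) (unfold a, intro divide_nonneg_nonneg mult_nonneg_nonneg, auto)
next
  case (step y z) then show ?case using Inv_step[OF fin HL a] by blast
qed

theorem mainTheorem3:
  shows "\<exists>c>0. \<forall>V E len Lf Lb.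
           valid_graph V E len \<and> 2 \<le> card V \<and> ghhl_output V E len Lf Lb \<longrightarrow>
           real (hl_size V Lf Lb) \<le> c * sqrt (real (card V)) * ln (real (card V)) * real (hl_opt V E len)"
proof (intro exI[of _ "2 / ln 2"] conjI allI impI)
  show "(0::real) < 2 / ln 2" by simp
  fix V E len Lf Lb
  assume asm: "valid_graph V E len \<and> 2 \<le> card V \<and> ghhl_output V E len Lf Lb"
  then have fin: "finite V" and n2: "2 \<le> card V" by (auto simp: valid_graph_def)
  from asm obtain S where run: "(ghhl_step V E len)\<^sup>*\<^sup>* ({}, (\<lambda>_. {}), (\<lambda>_. {})) (S, Lf, Lb)"
    and cov: "uncovered V E len Lf Lb = {}" by (auto simp: ghhl_output_def)
  have "(\<lambda>st. \<forall>u. fst (snd st) u \<subseteq> V \<and> snd (snd st) u \<subseteq> V) (S, Lf, Lb)"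
    using run
  proof induction
    case base show ?case by simp
  next
    case (step y z)
    obtain S1 Lf1 Lb1 where y: "y = (S1, Lf1, Lb1)" by (cases y) auto
    obtain S2 Lf2 Lb2 where z: "z = (S2, Lf2, Lb2)" by (cases z) auto
    have "ghhl_step V E len (S1, Lf1, Lb1) (S2, Lf2, Lb2)" "\<forall>u. Lf1 u \<subseteq> V \<and> Lb1 u \<subseteq> V"
      using step(2,3) unfolding y z by auto
    then show ?case unfolding z
      by (auto simp: ghhl_step_def split: if_splits) (meson subsetD)+
  qed
  then have "\<forall>u. Lf u \<subseteq> V \<and> Lb u \<subseteq> V" by simp
  then have "is_HL V E len Lf Lb" using cov by (auto simp: is_HL_def uncovered_def)
  then have "\<exists>s Lf Lb. is_HL V E len Lf Lb \<and> hl_size V Lf Lb = s" by blast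
  then have "\<exists>Lf Lb. is_HL V E len Lf Lb \<and> hl_size V Lf Lb = hl_opt V E len"
    unfolding hl_opt_def by (rule LeastI_ex[where P="\<lambda>s. \<exists>Lf Lb. is_HL V E len Lf Lb \<and> hl_size V Lf Lb = s"])
  then obtain Lo Bo where HL: "is_HL V E len Lo Bo" and opt: "hl_size V Lo Bo = hl_opt V E len" by blast
  define a where "a = sqrt (real (card V)) * real (hl_size V Lo Bo) / 2"
  have a0: "0 \<le> a" unfolding a_def by (intro divide_nonneg_nonneg mult_nonneg_nonneg) auto
  have "Inv V E len a (S, Lf, Lb)" by (rule run_Inv[OF fin HL a_def run])
  then have "real (hl_size V Lf Lb) + pot a (real (card (uncovered V E len Lf Lb))) \<le> 4*a"
    by (simp add: Inv_def)
  then have h: "real (hl_size V Lf Lb) \<le> 2 * sqrt (real (card V)) * real (hl_opt V E len)"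
    using pot_nonneg[OF a0, of "real (card (uncovered V E len Lf Lb))"] by (simp add: a_def opt)
  have "ln 2 \<le> ln (real (card V))" using n2 by simp
  then have "2 \<le> 2 / ln 2 * ln (real (card V))" by (simp add: field_simps)
  then have "2 * (sqrt (real (card V)) * real (hl_opt V E len))
       \<le> (2 / ln 2 * ln (real (card V))) * (sqrt (real (card V)) * real (hl_opt V E len))"
    by (intro mult_right_mono) auto
  then show "real (hl_size V Lf Lb) \<le> 2 / ln 2 * sqrt (real (card V)) * ln (real (card V)) * real (hl_opt V E len)"
    using h by (simp add: algebra_simps)
qed

end
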